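(* Let $\mathbf x=(x_1,x_2,x_3)\in\mathbb Z_{\ge1}^3$ and let $\mathbf q=(\mathbf r,\mathbf x)$, where $\mathbf r$ is one of (i) $\mathbf r=(1,\,1+x_1,\,(1+x_1)(1+x_2))$; (ii) $\mathbf r=(1+x_2,\,1+x_1(1+x_2),\,(1+x_1(1+x_2))(1+x_2))$; (iv) $\mathbf r=(1,\,(1+x_1)(1+x_3),\,(1+x_1)(1+x_2(1+x_3)))$. Then the $h^*$-polynomial of $\Delta_{(1,\mathbf q)}$ is unimodal.
   Context: For $\mathbf q=(q_1,\dots,q_n)\in\mathbb Z_{\ge1}^n$ with $q_1\le\cdots\le q_n$, let $\Delta_{(1,\mathbf q)}=\mathrm{conv}\{e_1,\dots,e_n,-\sum_{i=1}^n q_ie_i\}\subset\mathbb R^n$. Given distinct positive integers $r_1<r_2<r_3$ and positive integers $x_1,x_2,x_3$, $\mathbf q=(\mathbf r,\mathbf x)$ denotes the vector consisting of $x_1$ copies of $r_1$, then $x_2$ copies of $r_2$, then $x_3$ copies of $r_3$. For a lattice polytope $P\subset\mathbb R^n$ of dimension $\dim P$, its Ehrhart series is $\sum_{t\ge0}|tP\cap\mathbb Z^n|z^t=h^*(P;z)/(1-z)^{\dim P+1}$, where $h^*(P;z)=h_0^*+h_1^*z+\cdots+h_s^*z^s$ is a polynomial with nonnegative integer coefficients, the $h^*$-polynomial. A polynomial $\sum_{i=0}^s p_iz^i$ is unimodal if there is $t$ with $p_0\le\cdots\le p_t\ge\cdots\ge p_s$. *)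

theory Defs
  imports "HOL-Analysis.Analysis" "HOL-Computational_Algebra.Polynomial_FPS"
begin

definition simplex1q :: "('n::finite \<Rightarrow> nat) \<Rightarrow> (real^'n) set" where
  "simplex1q q = convex hull (insert (\<chi> i. - real (q i)) {axis i 1 | i. True})"

definition lattice_count :: "(real^'n::finite) set \<Rightarrow> nat \<Rightarrow> nat" where
  "lattice_count P t = card {z \<in> (\<lambda>p. real t *\<^sub>R p) ` P. \<forall>i. z $ i \<in> \<int>}"

definition ehrhart_series :: "(real^'n::finite) set \<Rightarrow> int fps" where
  "ehrhart_series P = Abs_fps (\<lambda>t. int (lattice_count P t))"

definition h_star :: "(real^'n::finite) set \<Rightarrow> int poly" where
  "h_star P = (THE p. fps_of_poly p = ehrhart_series P * (1 - fps_X) ^ (nat (aff_dim P) + 1))"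

definition unimodal :: "int poly \<Rightarrow> bool" where
  "unimodal p \<longleftrightarrow> (\<exists>t \<le> degree p. (\<forall>i < t. coeff p i \<le> coeff p (Suc i)) \<and>
                       (\<forall>i. t \<le> i \<and> i < degree p \<longrightarrow> coeff p (Suc i) \<le> coeff p i))"

text \<open>q = (r,x): x1 copies of r1, then x2 copies of r2, then x3 copies of r3 (positions 0..n-1).\<close>
definition qvec :: "nat \<Rightarrow> nat \<Rightarrow> nat \<Rightarrow> nat \<Rightarrow> nat \<Rightarrow> nat \<Rightarrow> nat \<Rightarrow> nat" where
  "qvec r1 r2 r3 x1 x2 x3 j = (if j < x1 then r1 else if j < x1 + x2 then r2 else r3)"

end

theory Submission
  imports Defs
begin


definition CI :: "'a set \<Rightarrow> nat \<Rightarrow> nat" where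
  "CI I m = card {v :: 'a \<Rightarrow> nat. (\<forall>i. i \<notin> I \<longrightarrow> v i = 0) \<and> sum v I = m}"

lemma CI_finite: "finite I \<Longrightarrow> finite {v :: 'a \<Rightarrow> nat. (\<forall>i. i \<notin> I \<longrightarrow> v i = 0) \<and> sum v I = m}"
proof -
  assume I: "finite I"
  have "{v :: 'a \<Rightarrow> nat. (\<forall>i. i \<notin> I \<longrightarrow> v i = 0) \<and> sum v I = m}
     \<subseteq> {f. \<forall>x. (x \<in> I \<longrightarrow> f x \<in> {..m}) \<and> (x \<notin> I \<longrightarrow> f x = 0)}"
    using I by (auto intro: member_le_sum[where f=id, simplified] simp: member_le_sum)
  then show ?thesis using finite_subset finite_set_of_finite_funs[OF I, of "{..m}" 0] by blast
qed

lemma CI_insert: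
  assumes I: "finite I" and a: "a \<notin> I"
  shows "CI (insert a I) m = (\<Sum>j\<le>m. CI I j)"
proof -
  let ?S = "\<lambda>I m. {v :: 'a \<Rightarrow> nat. (\<forall>i. i \<notin> I \<longrightarrow> v i = 0) \<and> sum v I = m}"
  have "bij_betw (\<lambda>v. (v a, v(a:=0))) (?S (insert a I) m) (Sigma {..m} (\<lambda>j. ?S I (m - j)))"
  proof (rule bij_betwI[where g="\<lambda>(j,v). v(a:=j)"])
    show "(\<lambda>v. (v a, v(a:=0))) \<in> ?S (insert a I) m \<rightarrow> Sigma {..m} (\<lambda>j. ?S I (m - j))"
    proof
      fix v assume v: "v \<in> ?S (insert a I) m"
      have s: "sum v (insert a I) = v a + sum v I" using I a by simp
      have "sum (v(a:=0)) I = sum v I" using a by (intro sum.cong) auto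
      then show "(v a, v(a:=0)) \<in> Sigma {..m} (\<lambda>j. ?S I (m - j))" using v s by auto
    qed
    show "(\<lambda>(j,v). v(a:=j)) \<in> Sigma {..m} (\<lambda>j. ?S I (m - j)) \<rightarrow> ?S (insert a I) m"
    proof
      fix p assume p: "p \<in> Sigma {..m} (\<lambda>j. ?S I (m - j))"
      obtain j v where pj: "p = (j, v)" by (cases p)
      have "sum (v(a:=j)) I = sum v I" using a by (intro sum.cong) auto
      then show "(\<lambda>(j,v). v(a:=j)) p \<in> ?S (insert a I) m" using p pj I a by auto
    qed
    show "\<And>v. v \<in> ?S (insert a I) m \<Longrightarrow> (\<lambda>(j,v). v(a:=j)) (v a, v(a:=0)) = v" by auto
    show "\<And>p. p \<in> Sigma {..m} (\<lambda>j. ?S I (m - j)) \<Longrightarrow> (\<lambda>v. (v a, v(a:=0))) ((\<lambda>(j,v). v(a:=j)) p) = p"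
      using a by auto
  qed
  then have "CI (insert a I) m = card (Sigma {..m} (\<lambda>j. ?S I (m - j)))"
    unfolding CI_def by (rule bij_betw_same_card)
  also have "\<dots> = (\<Sum>j\<le>m. CI I (m - j))"
    using CI_finite[OF I] by (subst card_SigmaI) (auto simp: CI_def)
  also have "\<dots> = (\<Sum>j\<le>m. CI I j)"
    by (rule sum.reindex_bij_witness[where i="\<lambda>j. m - j" and j="\<lambda>j. m - j"]) auto
  finally show ?thesis .
qed

lemma CI_empty: "CI {} m = (if m = 0 then 1 else 0)"
proof -
  have "{v :: 'a \<Rightarrow> nat. (\<forall>i. i \<notin> {} \<longrightarrow> v i = 0) \<and> sum v {} = m} = (if m = 0 then {\<lambda>_. 0} else {})"
    by auto
  then show ?thesis unfolding CI_def by simp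
qed

lemma CI_fps:
  assumes "finite I"
  shows "Abs_fps (\<lambda>m. int (CI I m)) * (1 - fps_X) ^ card I = 1"
  using assms
proof (induction I rule: finite_induct)
  case empty
  show ?case by (rule fps_ext) (simp add: CI_empty)
next
  case (insert a I)
  have eq: "Abs_fps (\<lambda>m. int (CI I m)) = (1 - fps_X) * Abs_fps (\<lambda>m. int (CI (insert a I) m))"
  proof -
    have "Abs_fps (\<lambda>m. int (CI (insert a I) m)) = Abs_fps (\<lambda>n. sum (\<lambda>i. fps_nth (Abs_fps (\<lambda>m. int (CI I m))) i) {0..n})"
      using insert by (auto intro!: fps_ext simp: CI_insert atMost_atLeast0)
    then show ?thesis using fps_divide_fps_X_minus1_sum_lemma by metis
  qed
  have "Abs_fps (\<lambda>m. int (CI (insert a I) m)) * (1 - fps_X) ^ card (insert a I)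
      = ((1 - fps_X) * Abs_fps (\<lambda>m. int (CI (insert a I) m))) * (1 - fps_X) ^ card I"
    using insert by (simp add: algebra_simps)
  also have "\<dots> = 1" using eq insert by simp
  finally show ?case .
qed



definition Nq :: "('n::finite \<Rightarrow> nat) \<Rightarrow> nat" where "Nq q = 1 + sum q UNIV"

definition Qset :: "('n::finite \<Rightarrow> nat) \<Rightarrow> (real^'n) set" where
  "Qset q = {p. 0 \<le> 1 - (\<Sum>i\<in>UNIV. p$i) \<and>
     (\<forall>i. 0 \<le> real (Nq q) * p$i + (1 - (\<Sum>i\<in>UNIV. p$i)) * real (q i))}"

lemma Qset_convex: fixes q :: "'n::finite \<Rightarrow> nat" shows "convex (Qset q)"
  unfolding convex_def
proof (intro ballI allI impI)
  fix x y :: "real^'n" and u v :: real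
  assume x: "x \<in> Qset q" and y: "y \<in> Qset q" and uv: "0 \<le> u" "0 \<le> v" "u + v = 1"
  let ?z = "u *\<^sub>R x + v *\<^sub>R y"
  have sz: "(\<Sum>i\<in>UNIV. ?z$i) = u * (\<Sum>i\<in>UNIV. x$i) + v * (\<Sum>i\<in>UNIV. y$i)"
    by (simp add: sum.distrib sum_distrib_left)
  have e1: "1 - (\<Sum>i\<in>UNIV. ?z$i) = u * (1 - (\<Sum>i\<in>UNIV. x$i)) + v * (1 - (\<Sum>i\<in>UNIV. y$i))"
    using sz uv by (simp add: algebra_simps)
  show "?z \<in> Qset q"
    unfolding Qset_def mem_Collect_eq
  proof (intro conjI allI)
    show "0 \<le> 1 - (\<Sum>i\<in>UNIV. ?z$i)" unfolding e1 using x y uv by (simp add: Qset_def)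
    fix i
    have "real (Nq q) * ?z$i + (1 - (\<Sum>i\<in>UNIV. ?z$i)) * real (q i)
       = u * (real (Nq q) * x$i + (1 - (\<Sum>i\<in>UNIV. x$i)) * real (q i))
       + v * (real (Nq q) * y$i + (1 - (\<Sum>i\<in>UNIV. y$i)) * real (q i))"
      unfolding e1 by (simp add: algebra_simps)
    also have "\<dots> \<ge> 0" using x y uv by (simp add: Qset_def)
    finally show "0 \<le> real (Nq q) * ?z$i + (1 - (\<Sum>i\<in>UNIV. ?z$i)) * real (q i)" .
  qed
qed

lemma sum_axis: "(\<Sum>j\<in>UNIV. (axis i (1::real))$j) = 1"
  by (simp add: axis_def)

lemma simplex_eq: fixes q :: "'n::finite \<Rightarrow> nat" shows "simplex1q q = Qset q"
proof
  show "simplex1q q \<subseteq> Qset q"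
    unfolding simplex1q_def
  proof (rule hull_minimal)
    show "convex (Qset q)" by (rule Qset_convex)
    show "insert (\<chi> i. - real (q i)) {axis i 1 |i. True} \<subseteq> Qset q"
    proof
      fix x assume "x \<in> insert (\<chi> i. - real (q i)) {axis i 1 |i. True}"
      then consider "x = (\<chi> i. - real (q i))" | i where "x = axis i 1" by auto
      then show "x \<in> Qset q"
      proof cases
        case 1
        have s: "(\<Sum>i\<in>UNIV. x$i) = - real (sum q UNIV)" using 1 by (simp add: sum_negf)
        show ?thesis proof -
          have "(\<Sum>x\<in>UNIV. real (q x)) \<ge> 0" by (rule sum_nonneg) simp
          then show ?thesis using s 1 by (simp add: Qset_def Nq_def algebra_simps)
        qed
      next
        case 2
        show ?thesis unfolding Qset_def using 2 by (simp add: sum_axis axis_def)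
      qed
    qed
  qed
next
  show "Qset q \<subseteq> simplex1q q"
  proof
    fix p assume p: "p \<in> Qset q"
    define S where "S = (\<Sum>i\<in>UNIV. p$i)"
    define N where "N = real (Nq q)"
    have Npos: "N > 0" proof - have "Nq q > 0" by (simp add: Nq_def) then show ?thesis by (simp add: N_def) qed
    define mu where "mu = (1 - S) / N"
    define lam where "lam i = p$i + mu * real (q i)" for i
    have mu0: "mu \<ge> 0" using p Npos by (simp add: Qset_def mu_def S_def)
    have lam0: "lam i \<ge> 0" for i
    proof -
      have "0 \<le> N * p$i + (1 - S) * real (q i)" using p by (simp add: Qset_def N_def S_def)
      then have "0 \<le> (N * p$i + (1 - S) * real (q i)) / N" using Npos by simp
      also have "\<dots> = lam i" using Npos by (simp add: lam_def mu_def field_simps)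
      finally show ?thesis .
    qed
    have NS: "N = 1 + (\<Sum>i\<in>UNIV. real (q i))" by (simp add: N_def Nq_def)
    have sl: "(\<Sum>i\<in>UNIV. lam i) = 1 - mu"
    proof -
      have "(\<Sum>i\<in>UNIV. lam i) = S + mu * (\<Sum>i\<in>UNIV. real (q i))"
        by (simp add: lam_def sum.distrib sum_distrib_left S_def)
      also have "\<dots> = S + mu * (N - 1)" using NS by simp
      also have "\<dots> = 1 - mu" using Npos by (simp add: mu_def field_simps)
      finally show ?thesis .
    qed
    define a where "a = (\<lambda>x::'n option. case x of None \<Rightarrow> mu | Some i \<Rightarrow> lam i)"
    define y where "y = (\<lambda>x::'n option. case x of None \<Rightarrow> (\<chi> i. - real (q i)) | Some i \<Rightarrow> axis i (1::real))"
    have sumopt: "(\<Sum>x\<in>UNIV. f x) = f None + (\<Sum>i\<in>UNIV. f (Some i))" for f :: "'n option \<Rightarrow> 'b::comm_monoid_add"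
      by (subst UNIV_option_conv) (simp add: sum.reindex)
    have "(\<Sum>j\<in>UNIV. a j *\<^sub>R y j) \<in> simplex1q q"
      unfolding simplex1q_def
    proof (rule convex_sum)
      show "finite (UNIV :: 'n option set)" by simp
      show "convex (convex hull insert (\<chi> i. - real (q i)) {axis i 1 |i. True})" by simp
      show "(\<Sum>i\<in>UNIV. a i) = 1" unfolding sumopt using sl by (simp add: a_def)
      show "\<And>i. i \<in> UNIV \<Longrightarrow> 0 \<le> a i" using mu0 lam0 by (auto simp: a_def split: option.splits)
      show "\<And>i. i \<in> UNIV \<Longrightarrow> y i \<in> convex hull insert (\<chi> i. - real (q i)) {axis i 1 |i. True}"
        by (auto simp: y_def split: option.splits intro: hull_inc)
    qed
    moreover have "(\<Sum>j\<in>UNIV. a j *\<^sub>R y j) = p"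
    proof (rule vec_eq_iff[THEN iffD2], rule allI)
      fix k
      have "(\<Sum>j\<in>UNIV. a j *\<^sub>R y j) $ k = - mu * real (q k) + (\<Sum>i\<in>UNIV. lam i * (axis i 1 :: real^'n) $ k)"
        unfolding sumopt by (simp add: a_def y_def)
      also have "(\<Sum>i\<in>UNIV. lam i * (axis i 1 :: real^'n) $ k) = lam k"
        by (simp add: axis_def if_distrib cong: if_cong)
      finally show "(\<Sum>j\<in>UNIV. a j *\<^sub>R y j) $ k = p $ k" by (simp add: lam_def)
    qed
    ultimately show "p \<in> simplex1q q" by simp
  qed
qed



lemma Nq_pos: "Nq q > 0" by (simp add: Nq_def)
lemma Nq_pos_real: "real (Nq q) > 0" using Nq_pos[of q] by (simp del: of_nat_sum)

lemma image_mem: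
  fixes q :: "'n::finite \<Rightarrow> nat" and z :: "real^'n"
  shows "z \<in> (\<lambda>p. real t *\<^sub>R p) ` simplex1q q \<longleftrightarrow>
     (0 \<le> real t - (\<Sum>i\<in>UNIV. z$i) \<and>
      (\<forall>i. 0 \<le> real (Nq q) * z$i + (real t - (\<Sum>i\<in>UNIV. z$i)) * real (q i)))"
    (is "?L \<longleftrightarrow> ?R")
proof (cases "t = 0")
  case True
  have ne: "simplex1q q \<noteq> {}" unfolding simplex1q_def by simp
  have L: "?L \<longleftrightarrow> z = 0" using True ne by auto
  have "?R \<longleftrightarrow> z = 0"
  proof
    assume R: ?R
    define S where "S = (\<Sum>i\<in>UNIV. z$i)"
    have S0: "S \<le> 0" using R True by (simp add: S_def)
    have c: "0 \<le> real (Nq q) * z$i - S * real (q i)" for i using R True by (simp add: S_def)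
    have "0 \<le> (\<Sum>i\<in>UNIV. real (Nq q) * z$i - S * real (q i))" by (rule sum_nonneg) (use c in auto)
    also have "\<dots> = real (Nq q) * S - S * (\<Sum>i\<in>UNIV. real (q i))"
      by (simp add: sum_subtractf sum_distrib_left S_def)
    also have "\<dots> = S" by (simp add: Nq_def algebra_simps)
    finally have S: "S = 0" using S0 by simp
    have zi: "0 \<le> z$i" for i
    proof -
      have "0 \<le> real (Nq q) * z$i" using c[of i] S by simp
      moreover have "real (Nq q) > 0" by (rule Nq_pos_real)
      ultimately show ?thesis by (simp add: zero_le_mult_iff)
    qed
    have "\<forall>i\<in>UNIV. z$i = 0" using S zi sum_nonneg_eq_0_iff[of UNIV "\<lambda>i. z$i"] by (simp add: S_def)
    then show "z = 0" by (simp add: vec_eq_iff)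
  next
    assume "z = 0" then show ?R by simp
  qed
  then show ?thesis using L by simp
next
  case False
  then have tpos: "real t > 0" by simp
  have "?L \<longleftrightarrow> (1 / real t) *\<^sub>R z \<in> Qset q"
  proof
    assume ?L then obtain p where p: "p \<in> simplex1q q" "z = real t *\<^sub>R p" by auto
    then show "(1 / real t) *\<^sub>R z \<in> Qset q" using tpos simplex_eq by auto
  next
    assume "(1 / real t) *\<^sub>R z \<in> Qset q"
    then have "(1 / real t) *\<^sub>R z \<in> simplex1q q" using simplex_eq by auto
    moreover have "z = real t *\<^sub>R ((1 / real t) *\<^sub>R z)" using tpos by simp
    ultimately show ?L by blast
  qed
  also have "\<dots> \<longleftrightarrow> ?R"
  proof -
    define S where "S = (\<Sum>i\<in>UNIV. z$i)"
    have s1: "(\<Sum>i\<in>UNIV. ((1 / real t) *\<^sub>R z)$i) = S / real t"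
      by (simp add: S_def sum_divide_distrib)
    have a: "0 \<le> 1 - S / real t \<longleftrightarrow> 0 \<le> real t - S" using tpos by (simp add: field_simps)
    have b: "0 \<le> real (Nq q) * (z$i / real t) + (1 - S / real t) * real (q i)
        \<longleftrightarrow> 0 \<le> real (Nq q) * z$i + (real t - S) * real (q i)" for i
    proof -
      have "real (Nq q) * (z$i / real t) + (1 - S / real t) * real (q i)
          = (real (Nq q) * z$i + (real t - S) * real (q i)) / real t"
        using tpos by (simp add: field_simps)
      then show ?thesis using tpos by (simp add: zero_le_divide_iff)
    qed
    show ?thesis unfolding Qset_def mem_Collect_eq s1 using a b by (simp add: S_def)
  qed
  finally show ?thesis .
qed

definition Kset :: "('n::finite \<Rightarrow> nat) \<Rightarrow> nat \<Rightarrow> ('n \<Rightarrow> int) set" where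
  "Kset q t = {k. 0 \<le> int t - (\<Sum>i\<in>UNIV. k i) \<and>
     (\<forall>i. 0 \<le> int (Nq q) * k i + (int t - (\<Sum>i\<in>UNIV. k i)) * int (q i))}"

lemma lattice_Kset:
  fixes q :: "'n::finite \<Rightarrow> nat"
  shows "lattice_count (simplex1q q) t = card (Kset q t)"
proof -
  let ?L = "{z \<in> (\<lambda>p. real t *\<^sub>R p) ` simplex1q q. \<forall>i. z $ i \<in> \<int>}"
  have "bij_betw (\<lambda>z i. \<lfloor>z$i\<rfloor>) ?L (Kset q t)"
  proof (rule bij_betwI[where g="\<lambda>k. \<chi> i. of_int (k i)"])
    show "(\<lambda>z i. \<lfloor>z$i\<rfloor>) \<in> ?L \<rightarrow> Kset q t"
    proof
      fix z assume z: "z \<in> ?L"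
      have zi: "z$i = of_int \<lfloor>z$i\<rfloor>" for i using z by (auto elim: Ints_cases)
      have S: "(\<Sum>i\<in>UNIV. z$i) = of_int (\<Sum>i\<in>UNIV. \<lfloor>z$i\<rfloor>)"
        by (subst zi) simp
      have R: "0 \<le> real t - (\<Sum>i\<in>UNIV. z$i) \<and>
        (\<forall>i. 0 \<le> real (Nq q) * z$i + (real t - (\<Sum>i\<in>UNIV. z$i)) * real (q i))"
        using z image_mem by blast
      have R2: "0 \<le> real (Nq q) * of_int \<lfloor>z$i\<rfloor> + (real t - of_int (\<Sum>i\<in>UNIV. \<lfloor>z$i\<rfloor>)) * real (q i)" for i
        using R S zi[of i] by metis
      have e: "real (Nq q) * of_int \<lfloor>z$i\<rfloor> + (real t - of_int (\<Sum>i\<in>UNIV. \<lfloor>z$i\<rfloor>)) * real (q i)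
        = of_int (int (Nq q) * \<lfloor>z$i\<rfloor> + (int t - (\<Sum>i\<in>UNIV. \<lfloor>z$i\<rfloor>)) * int (q i))" for i
        by simp
      show "(\<lambda>i. \<lfloor>z$i\<rfloor>) \<in> Kset q t"
        unfolding Kset_def mem_Collect_eq
      proof (intro conjI allI)
        have "0 \<le> real t - of_int (\<Sum>i\<in>UNIV. \<lfloor>z$i\<rfloor>)" using R S by simp
        then show "0 \<le> int t - (\<Sum>i\<in>UNIV. \<lfloor>z$i\<rfloor>)" by linarith
        fix i
        have "0 \<le> (of_int (int (Nq q) * \<lfloor>z$i\<rfloor> + (int t - (\<Sum>i\<in>UNIV. \<lfloor>z$i\<rfloor>)) * int (q i)) :: real)"
          using R2[of i] e[of i] by simp
        then show "0 \<le> int (Nq q) * \<lfloor>z$i\<rfloor> + (int t - (\<Sum>i\<in>UNIV. \<lfloor>z$i\<rfloor>)) * int (q i)"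
          by linarith
      qed
    qed
    show "(\<lambda>k. \<chi> i. of_int (k i)) \<in> Kset q t \<rightarrow> ?L"
    proof
      fix k assume k: "k \<in> Kset q t"
      let ?z = "(\<chi> i. of_int (k i)) :: real^'n"
      have S: "(\<Sum>i\<in>UNIV. ?z$i) = of_int (\<Sum>i\<in>UNIV. k i)" by simp
      have "0 \<le> real t - (\<Sum>i\<in>UNIV. ?z$i) \<and>
        (\<forall>i. 0 \<le> real (Nq q) * ?z$i + (real t - (\<Sum>i\<in>UNIV. ?z$i)) * real (q i))"
      proof (intro conjI allI)
        have "0 \<le> int t - (\<Sum>i\<in>UNIV. k i)" using k by (simp add: Kset_def)
        then show "0 \<le> real t - (\<Sum>i\<in>UNIV. ?z$i)" unfolding S by linarith
        fix i
        have "0 \<le> int (Nq q) * k i + (int t - (\<Sum>i\<in>UNIV. k i)) * int (q i)" using k by (simp add: Kset_def)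
        then have "0 \<le> (of_int (int (Nq q) * k i + (int t - (\<Sum>i\<in>UNIV. k i)) * int (q i)) :: real)"
          by linarith
        then show "0 \<le> real (Nq q) * ?z$i + (real t - (\<Sum>i\<in>UNIV. ?z$i)) * real (q i)"
          unfolding S by simp
      qed
      then show "?z \<in> ?L" using image_mem[of ?z t q] by auto
    qed
    show "\<And>z. z \<in> ?L \<Longrightarrow> (\<chi> i. of_int (\<lfloor>z$i\<rfloor>)) = z"
      by (auto simp: vec_eq_iff elim: Ints_cases)
    show "\<And>k. k \<in> Kset q t \<Longrightarrow> (\<lambda>i. \<lfloor>(\<chi> i. (of_int (k i) :: real))$i\<rfloor>) = k"
      by auto
  qed
  then show ?thesis unfolding lattice_count_def by (rule bij_betw_same_card)
qed



definition Dq :: "('n::finite \<Rightarrow> nat) \<Rightarrow> nat \<Rightarrow> nat" where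
  "Dq q s = (\<Sum>i\<in>UNIV. q i * s div Nq q)"

definition wq :: "('n::finite \<Rightarrow> nat) \<Rightarrow> nat \<Rightarrow> nat" where
  "wq q b = b - Dq q b"

lemma Dq_add: "Dq q (b + c * Nq q) = Dq q b + c * (Nq q - 1)"
proof -
  have "q i * (b + c * Nq q) div Nq q = q i * b div Nq q + q i * c" for i
  proof -
    have "q i * (b + c * Nq q) = q i * b + (q i * c) * Nq q" by (simp add: algebra_simps)
    then show ?thesis using Nq_pos[of q] by simp
  qed
  then have "Dq q (b + c * Nq q) = Dq q b + c * sum q UNIV"
    by (simp add: Dq_def sum.distrib sum_distrib_left mult.commute)
  then show ?thesis by (simp add: Nq_def)
qed

lemma Dq_le: "Dq q b \<le> b"
proof -
  have "Nq q * Dq q b = (\<Sum>i\<in>UNIV. Nq q * (q i * b div Nq q))" by (simp add: Dq_def sum_distrib_left)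
  also have "\<dots> \<le> (\<Sum>i\<in>UNIV. q i * b)"
    by (rule sum_mono) (simp add: times_div_less_eq_dividend)
  also have "\<dots> = b * sum q UNIV" by (simp add: sum_distrib_left mult.commute sum_distrib_right)
  also have "\<dots> \<le> Nq q * b" by (simp add: Nq_def)
  finally show ?thesis using Nq_pos[of q] by simp
qed

lemma floor_bound:
  fixes k :: int and x N :: nat
  assumes N: "N > 0" and h: "0 \<le> int N * k + int x"
  shows "0 \<le> k + int (x div N)"
proof (rule ccontr)
  assume "\<not> ?thesis"
  then have "k \<le> - int (x div N) - 1" by simp
  then have "int N * k \<le> int N * (- int (x div N) - 1)" using N by (intro mult_left_mono) auto
  moreover have "int x = int N * int (x div N) + int (x mod N)"
    by (metis of_nat_add of_nat_mult div_mult_mod_eq mult.commute)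
  moreover have "int (x mod N) < int N" using N by simp
  ultimately show False using h by (simp add: algebra_simps)
qed

definition Kp :: "('n::finite \<Rightarrow> nat) \<Rightarrow> nat \<Rightarrow> (nat \<times> ('n \<Rightarrow> nat)) set" where
  "Kp q t = {(s, u). s + sum u UNIV = t + Dq q s}"

lemma Kset_Kp:
  fixes q :: "'n::finite \<Rightarrow> nat"
  shows "card (Kset q t) = card (Kp q t)"
proof -
  let ?d = "\<lambda>s i. q i * s div Nq q"
  let ?f = "\<lambda>k. (nat (int t - (\<Sum>i\<in>UNIV. k i)), \<lambda>i. nat (k i + int (?d (nat (int t - (\<Sum>i\<in>UNIV. k i))) i)))"
  let ?g = "\<lambda>(s, u) i. int (u i) - int (?d s i)"
  have dsum: "(\<Sum>i\<in>UNIV. int (?d s i)) = int (Dq q s)" for s by (simp add: Dq_def)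
  have dle: "int (Nq q) * int (?d s i) \<le> int (q i) * int s" for s i
  proof -
    have "Nq q * (q i * s div Nq q) \<le> q i * s" by (simp add: times_div_less_eq_dividend)
    then show ?thesis by (metis of_nat_le_iff of_nat_mult)
  qed
  have "bij_betw ?f (Kset q t) (Kp q t)"
  proof (rule bij_betwI[where g="?g"])
    show "?f \<in> Kset q t \<rightarrow> Kp q t"
    proof
      fix k assume k: "k \<in> Kset q t"
      define s where "s = nat (int t - (\<Sum>i\<in>UNIV. k i))"
      have s: "int s = int t - (\<Sum>i\<in>UNIV. k i)" using k by (simp add: Kset_def s_def)
      have nn: "0 \<le> k i + int (?d s i)" for i
      proof (rule floor_bound)
        show "Nq q > 0" by (rule Nq_pos)
        have "0 \<le> int (Nq q) * k i + (int t - (\<Sum>i\<in>UNIV. k i)) * int (q i)" using k by (simp add: Kset_def)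
        then show "0 \<le> int (Nq q) * k i + int (q i * s)" using s by (simp add: mult.commute)
      qed
      have "int (sum (\<lambda>i. nat (k i + int (?d s i))) UNIV) = (\<Sum>i\<in>UNIV. k i + int (?d s i))"
        using nn by simp
      also have "\<dots> = (\<Sum>i\<in>UNIV. k i) + int (Dq q s)" by (simp add: sum.distrib dsum)
      finally have "int s + int (sum (\<lambda>i. nat (k i + int (?d s i))) UNIV) = int t + int (Dq q s)"
        using s by simp
      then have "s + sum (\<lambda>i. nat (k i + int (?d s i))) UNIV = t + Dq q s" by linarith
      then show "?f k \<in> Kp q t" by (simp add: Kp_def s_def)
    qed
    show "?g \<in> Kp q t \<rightarrow> Kset q t"
    proof
      fix p assume p: "p \<in> Kp q t"
      obtain s u where su: "p = (s, u)" by (cases p)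
      have e: "s + sum u UNIV = t + Dq q s" using p su by (simp add: Kp_def)
      have S: "(\<Sum>i\<in>UNIV. int (u i) - int (?d s i)) = int (sum u UNIV) - int (Dq q s)"
        by (simp add: sum_subtractf dsum)
      have ts: "int t - (\<Sum>i\<in>UNIV. int (u i) - int (?d s i)) = int s"
        unfolding S using e by linarith
      show "?g p \<in> Kset q t"
        unfolding su Kset_def mem_Collect_eq split ts
      proof (intro conjI allI)
        show "0 \<le> int s" by simp
        fix i
        have a: "0 \<le> int (Nq q) * int (u i)" by simp
        have "int (Nq q) * (int (u i) - int (?d s i)) + int s * int (q i)
           = int (Nq q) * int (u i) + (int (q i) * int s - int (Nq q) * int (?d s i))"
          by (simp add: algebra_simps)
        then show "0 \<le> int (Nq q) * (int (u i) - int (?d s i)) + int s * int (q i)"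
          using dle[where s=s and i=i] a by linarith
      qed
    qed
    show "\<And>k. k \<in> Kset q t \<Longrightarrow> ?g (?f k) = k"
    proof -
      fix k assume k: "k \<in> Kset q t"
      define s where "s = nat (int t - (\<Sum>i\<in>UNIV. k i))"
      have s: "int s = int t - (\<Sum>i\<in>UNIV. k i)" using k by (simp add: Kset_def s_def)
      have nn: "0 \<le> k i + int (?d s i)" for i
      proof (rule floor_bound)
        show "Nq q > 0" by (rule Nq_pos)
        have "0 \<le> int (Nq q) * k i + (int t - (\<Sum>i\<in>UNIV. k i)) * int (q i)" using k by (simp add: Kset_def)
        then show "0 \<le> int (Nq q) * k i + int (q i * s)" using s by (simp add: mult.commute)
      qed
      show "?g (?f k) = k" using nn by (simp add: s_def[symmetric])
    qed
    show "\<And>p. p \<in> Kp q t \<Longrightarrow> ?f (?g p) = p"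
    proof -
      fix p assume p: "p \<in> Kp q t"
      obtain s u where su: "p = (s, u)" by (cases p)
      have e: "s + sum u UNIV = t + Dq q s" using p su by (simp add: Kp_def)
      have S: "(\<Sum>i\<in>UNIV. int (u i) - int (?d s i)) = int (sum u UNIV) - int (Dq q s)"
        by (simp add: sum_subtractf dsum)
      have ts: "nat (int t - (\<Sum>i\<in>UNIV. int (u i) - int (?d s i))) = s"
        unfolding S using e by linarith
      show "?f (?g p) = p" unfolding su split ts by simp
    qed
  qed
  then show ?thesis by (rule bij_betw_same_card)
qed

definition Tset :: "('n::finite \<Rightarrow> nat) \<Rightarrow> nat \<Rightarrow> (nat \<times> ('n option \<Rightarrow> nat)) set" where
  "Tset q t = (SIGMA b:{..<Nq q}. {v. wq q b + sum v UNIV = t})"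

lemma sumopt: "(\<Sum>x\<in>UNIV. f x) = f None + (\<Sum>i\<in>UNIV. f (Some i))"
  for f :: "'n::finite option \<Rightarrow> 'b::comm_monoid_add"
  by (subst UNIV_option_conv) (simp add: sum.reindex)

lemma Kp_Tset:
  fixes q :: "'n::finite \<Rightarrow> nat"
  shows "card (Kp q t) = card (Tset q t)"
proof -
  let ?N = "Nq q"
  let ?f = "\<lambda>(s, u). (s mod ?N, \<lambda>x. case x of None \<Rightarrow> s div ?N | Some i \<Rightarrow> u i)"
  let ?g = "\<lambda>(b, v). (b + v None * ?N, \<lambda>i. v (Some i))"
  have key: "(b + c * ?N) + U = t + Dq q (b + c * ?N) \<longleftrightarrow> wq q b + (c + U) = t" for b c U
    using Dq_add[of q b c] Dq_le[of q b] Nq_pos[of q] unfolding wq_def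
    by (cases "?N") (auto simp: algebra_simps)
  have "bij_betw ?f (Kp q t) (Tset q t)"
  proof (rule bij_betwI[where g="?g"])
    show "?f \<in> Kp q t \<rightarrow> Tset q t"
    proof
      fix p assume p: "p \<in> Kp q t"
      obtain s u where su: "p = (s, u)" by (cases p)
      have e: "s + sum u UNIV = t + Dq q s" using p su by (simp add: Kp_def)
      have s: "s = s mod ?N + (s div ?N) * ?N" by simp
      have "wq q (s mod ?N) + (s div ?N + sum u UNIV) = t"
        using key[of "s mod ?N" "s div ?N" "sum u UNIV"] e s by simp
      then show "?f p \<in> Tset q t" using Nq_pos[of q] su by (simp add: Tset_def sumopt)
    qed
    show "?g \<in> Tset q t \<rightarrow> Kp q t"
    proof
      fix p assume p: "p \<in> Tset q t"
      obtain b v where bv: "p = (b, v)" by (cases p)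
      have e: "wq q b + (v None + (\<Sum>i\<in>UNIV. v (Some i))) = t" and b: "b < ?N"
        using p bv by (auto simp: Tset_def sumopt)
      show "?g p \<in> Kp q t" using key[of b "v None" "\<Sum>i\<in>UNIV. v (Some i)"] e bv by (simp add: Kp_def)
    qed
    show "\<And>p. p \<in> Kp q t \<Longrightarrow> ?g (?f p) = p" by auto
    show "\<And>p. p \<in> Tset q t \<Longrightarrow> ?f (?g p) = p"
    proof -
      fix p assume p: "p \<in> Tset q t"
      obtain b v where bv: "p = (b, v)" by (cases p)
      have b: "b < ?N" using p bv by (simp add: Tset_def)
      have "(\<lambda>x. case x of None \<Rightarrow> (b + v None * ?N) div ?N | Some i \<Rightarrow> v (Some i)) = v"
        using b by (auto split: option.splits)
      then show "?f (?g p) = p" using b bv by (auto intro!: ext split: option.splits)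
    qed
  qed
  then show ?thesis by (rule bij_betw_same_card)
qed

lemma card_Tset:
  fixes q :: "'n::finite \<Rightarrow> nat"
  shows "card (Tset q t) = (\<Sum>b<Nq q. if wq q b \<le> t then CI (UNIV :: 'n option set) (t - wq q b) else 0)"
proof -
  have fin: "finite {v :: 'n option \<Rightarrow> nat. wq q b + sum v UNIV = t}" for b
    using CI_finite[of "UNIV :: 'n option set" "t - wq q b"]
    by (rule finite_subset[rotated]) auto
  have c: "card {v :: 'n option \<Rightarrow> nat. wq q b + sum v UNIV = t}
      = (if wq q b \<le> t then CI (UNIV :: 'n option set) (t - wq q b) else 0)" for b
  proof (cases "wq q b \<le> t")
    case True
    then have "{v :: 'n option \<Rightarrow> nat. wq q b + sum v UNIV = t} =
      {v. (\<forall>i. i \<notin> (UNIV :: 'n option set) \<longrightarrow> v i = 0) \<and> sum v UNIV = t - wq q b}" by auto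
    then show ?thesis using True by (simp add: CI_def)
  next
    case False
    then have "{v :: 'n option \<Rightarrow> nat. wq q b + sum v UNIV = t} = {}" by auto
    then show ?thesis using False by simp
  qed
  show ?thesis unfolding Tset_def using fin by (subst card_SigmaI) (auto simp: c)
qed



lemma aff_dim_simplex:
  fixes q :: "'n::finite \<Rightarrow> nat"
  shows "aff_dim (simplex1q q) = int CARD('n)"
proof -
  have 0: "0 \<in> simplex1q q" unfolding simplex_eq Qset_def by simp
  have B: "Basis \<subseteq> simplex1q q"
    unfolding simplex1q_def Basis_vec_def by (auto intro!: hull_inc)
  have "affine hull (insert 0 (Basis :: (real^'n) set)) = span (insert 0 Basis)"
    by (rule affine_hull_span_0) (simp add: hull_inc)
  also have "\<dots> = UNIV" by (simp add: span_Basis)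
  finally have "aff_dim (insert 0 (Basis :: (real^'n) set)) = int DIM(real^'n)"
    using aff_dim_eq_full by blast
  then have "int CARD('n) \<le> aff_dim (simplex1q q)"
    using aff_dim_subset[of "insert 0 Basis" "simplex1q q"] 0 B by simp
  moreover have "aff_dim (simplex1q q) \<le> int CARD('n)"
    using aff_dim_le_DIM[of "simplex1q q"] by simp
  ultimately show ?thesis by simp
qed

definition Hpoly :: "('n::finite \<Rightarrow> nat) \<Rightarrow> int poly" where
  "Hpoly q = (\<Sum>b<Nq q. monom 1 (wq q b))"

lemma ehrhart_eq:
  fixes q :: "'n::finite \<Rightarrow> nat"
  shows "ehrhart_series (simplex1q q) =
    fps_of_poly (Hpoly q) * Abs_fps (\<lambda>m. int (CI (UNIV :: 'n option set) m))"
proof (rule fps_ext)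
  fix t
  have "fps_nth (ehrhart_series (simplex1q q)) t = int (card (Tset q t))"
    by (simp add: ehrhart_series_def lattice_Kset Kset_Kp Kp_Tset)
  also have "\<dots> = (\<Sum>b<Nq q. if wq q b \<le> t then int (CI (UNIV :: 'n option set) (t - wq q b)) else 0)"
    by (simp add: card_Tset of_nat_sum if_distrib cong: if_cong)
  also have "\<dots> = fps_nth (fps_of_poly (Hpoly q) * Abs_fps (\<lambda>m. int (CI (UNIV :: 'n option set) m))) t"
    unfolding Hpoly_def fps_of_poly_sum fps_of_poly_monom' sum_distrib_right fps_sum_nth
        fps_X_power_mult_nth
    by (rule sum.cong) auto
  finally show "fps_nth (ehrhart_series (simplex1q q)) t =
    fps_nth (fps_of_poly (Hpoly q) * Abs_fps (\<lambda>m. int (CI (UNIV :: 'n option set) m))) t" .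
qed

lemma hstar_eq:
  fixes q :: "'n::finite \<Rightarrow> nat"
  shows "h_star (simplex1q q) = Hpoly q"
proof -
  have c: "card (UNIV :: 'n option set) = CARD('n) + 1" by (simp add: card_UNIV_option)
  have "ehrhart_series (simplex1q q) * (1 - fps_X) ^ (nat (aff_dim (simplex1q q)) + 1)
      = fps_of_poly (Hpoly q) * (Abs_fps (\<lambda>m. int (CI (UNIV :: 'n option set) m)) * (1 - fps_X) ^ card (UNIV :: 'n option set))"
    unfolding ehrhart_eq aff_dim_simplex c by (simp add: mult.assoc)
  also have "\<dots> = fps_of_poly (Hpoly q)"
  proof -
    have cf: "Abs_fps (\<lambda>m. int (CI (UNIV :: 'n option set) m)) * (1 - fps_X) ^ card (UNIV :: 'n option set) = 1"
      by (rule CI_fps) simp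
    show ?thesis by (simp only: cf mult_1_right)
  qed
  finally have e: "ehrhart_series (simplex1q q) * (1 - fps_X) ^ (nat (aff_dim (simplex1q q)) + 1) = fps_of_poly (Hpoly q)" .
  show ?thesis unfolding h_star_def e
    by (rule the_equality) (auto simp: fps_of_poly_eq_iff)
qed



definition peak :: "(nat \<Rightarrow> int) \<Rightarrow> nat \<Rightarrow> bool" where
  "peak a t \<longleftrightarrow> (\<forall>i<t. a i \<le> a (Suc i)) \<and> (\<forall>i\<ge>t. a (Suc i) \<le> a i)"

lemma peak_unimodal: "peak (coeff p) t \<Longrightarrow> unimodal p"
  unfolding unimodal_def peak_def
proof -
  assume h: "(\<forall>i<t. coeff p i \<le> coeff p (Suc i)) \<and> (\<forall>i\<ge>t. coeff p (Suc i) \<le> coeff p i)"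
  show "\<exists>t\<le>degree p. (\<forall>i<t. coeff p i \<le> coeff p (Suc i)) \<and>
        (\<forall>i. t \<le> i \<and> i < degree p \<longrightarrow> coeff p (Suc i) \<le> coeff p i)"
  proof (cases "t \<le> degree p")
    case True then show ?thesis using h by blast
  next
    case False then show ?thesis using h by (intro exI[of _ "degree p"]) auto
  qed
qed

lemma peak_up:
  assumes pk: "peak a t" and ij: "i \<le> j" and jt: "j \<le> t" shows "a i \<le> a j"
proof -
  have "j \<le> t \<longrightarrow> a i \<le> a j" using ij
  proof (induction j rule: dec_induct)
    case base then show ?case by simp
  next
    case (step n) then show ?case using pk unfolding peak_def by (meson Suc_le_lessD order.trans less_imp_le)
  qed
  then show ?thesis using jt by simp
qed

lemma peak_down:
  assumes pk: "peak a t" and ti: "t \<le> i" and ij: "i \<le> j" shows "a j \<le> a i"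
proof -
  have "a j \<le> a i" using ij
  proof (induction j rule: dec_induct)
    case base then show ?case by simp
  next
    case (step n)
    have "a (Suc n) \<le> a n" using pk ti step(1) unfolding peak_def by simp
    then show ?case using step by simp
  qed
  then show ?thesis .
qed

definition Wd :: "nat \<Rightarrow> (nat \<Rightarrow> int) \<Rightarrow> nat \<Rightarrow> int" where
  "Wd k a j = (\<Sum>l\<le>k. if l \<le> j then a (j - l) else 0)"

lemma Wd_diff: "Wd k a (Suc j) = Wd k a j + (a (Suc j) - (if k \<le> j then a (j - k) else 0))"
proof (induction k)
  case 0 then show ?case by (simp add: Wd_def)
next
  case (Suc k)
  have "Wd (Suc k) a (Suc j) = Wd k a (Suc j) + (if Suc k \<le> Suc j then a (Suc j - Suc k) else 0)"
    by (simp add: Wd_def)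
  moreover have "Wd (Suc k) a j = Wd k a j + (if Suc k \<le> j then a (j - Suc k) else 0)"
    by (simp add: Wd_def)
  ultimately show ?case using Suc by (auto simp: Suc_diff_le)
qed

lemma Wd_nonneg: "(\<And>i. 0 \<le> a i) \<Longrightarrow> 0 \<le> Wd k a j"
  unfolding Wd_def by (rule sum_nonneg) auto

lemma Wd_peak:
  assumes nn: "\<And>i. 0 \<le> a i" and pk: "peak a t"
  shows "\<exists>t'. peak (Wd k a) t'"
proof -
  define d where "d j = a (Suc j) - (if k \<le> j then a (j - k) else 0)" for j
  have WS: "Wd k a (Suc j) = Wd k a j + d j" for j by (simp add: Wd_diff d_def)
  show ?thesis
  proof (cases "\<exists>j. d j < 0")
    case True
    define j0 where "j0 = (LEAST j. d j < 0)"
    have dj0: "d j0 < 0" using True unfolding j0_def by (rule LeastI_ex)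
    have before: "i < j0 \<Longrightarrow> 0 \<le> d i" for i using not_less_Least[of i "\<lambda>j. d j < 0"] j0_def by force
    have tj0: "t < Suc j0"
    proof (rule ccontr)
      assume "\<not> t < Suc j0"
      then have le: "Suc j0 \<le> t" by simp
      have "0 \<le> d j0"
      proof (cases "k \<le> j0")
        case True
        have "a (j0 - k) \<le> a (Suc j0)" using peak_up[OF pk _ le, of "j0 - k"] by simp
        then show ?thesis using True by (simp add: d_def)
      next
        case False then show ?thesis using nn by (simp add: d_def)
      qed
      then show False using dj0 by simp
    qed
    have after: "j0 \<le> i \<Longrightarrow> d i \<le> 0" for i
    proof -
      assume ij: "j0 \<le> i"
      show "d i \<le> 0"
      proof (cases "k \<le> i \<and> t \<le> i - k")
        case True
        have "a (Suc i) \<le> a (i - k)" using peak_down[OF pk, of "i - k" "Suc i"] True by simp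
        then show ?thesis using True by (simp add: d_def)
      next
        case False
        have A: "a (Suc i) \<le> a (Suc j0)" using peak_down[OF pk, of "Suc j0" "Suc i"] tj0 ij by simp
        have B: "(if k \<le> j0 then a (j0 - k) else 0) \<le> (if k \<le> i then a (i - k) else 0)"
        proof (cases "k \<le> j0")
          case True
          then have "k \<le> i" "i - k < t" using ij False by auto
          then have "a (j0 - k) \<le> a (i - k)" using peak_up[OF pk, of "j0 - k" "i - k"] ij by simp
          then show ?thesis using True \<open>k \<le> i\<close> by simp
        next
          case False then show ?thesis using nn by simp
        qed
        have "d i \<le> d j0" using A B by (simp add: d_def)
        then show ?thesis using dj0 by simp
      qed
    qed
    have "peak (Wd k a) j0"
      unfolding peak_def using before after WS by (auto simp: not_less)
    then show ?thesis by blast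
  next
    case False
    have "peak (Wd k a) (t + k)"
      unfolding peak_def
    proof (intro conjI allI impI)
      fix i show "Wd k a i \<le> Wd k a (Suc i)" using False WS[of i] by (simp add: not_less)
    next
      fix i assume "t + k \<le> i"
      then have "a (Suc i) \<le> a (i - k)" "k \<le> i" using peak_down[OF pk, of "i - k" "Suc i"] by auto
      then show "Wd k a (Suc i) \<le> Wd k a i" using WS[of i] by (simp add: d_def)
    qed
    then show ?thesis by blast
  qed
qed

definition U :: "nat \<Rightarrow> int poly" where "U k = (\<Sum>i<k. monom 1 i)"

lemma coeff_U: "coeff (U k) j = (if j < k then 1 else 0)"
  by (simp add: U_def coeff_sum)

lemma U_Suc: "U (Suc k) = U k + monom 1 k" by (simp add: U_def)

lemma coeff_U_mult: "coeff (U (Suc k) * p) j = Wd k (coeff p) j"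
proof -
  have "coeff (U (Suc k) * p) j = (\<Sum>l<Suc k. coeff (monom 1 l * p) j)"
    unfolding U_def sum_distrib_right coeff_sum ..
  also have "\<dots> = Wd k (coeff p) j"
    unfolding Wd_def coeff_monom_mult lessThan_Suc_atMost by (rule sum.cong) auto
  finally show ?thesis .
qed

lemma coeff_U_nonneg: "0 \<le> coeff (U k) j" by (simp add: coeff_U)

lemma peak_U: "peak (coeff (U k)) 0"
  unfolding peak_def by (simp add: coeff_U)



lemma sum_add_range: "(\<Sum>b<m+(R::nat). f b) = (\<Sum>b<m. f b) + (\<Sum>d<R. f (m + d))"
  by (induction R) (simp_all add: add.assoc)

lemma sum_split_mult: "(\<Sum>b<(a::nat)*R. f b) = (\<Sum>c<a. \<Sum>d<R. f (c*R + d))"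
proof (induction a)
  case 0 then show ?case by simp
next
  case (Suc a)
  have "(\<Sum>b<Suc a * R. f b) = (\<Sum>b<a*R + R. f b)" by (simp add: add.commute)
  also have "\<dots> = (\<Sum>b<a*R. f b) + (\<Sum>d<R. f (a*R + d))" by (rule sum_add_range)
  finally show ?case using Suc by simp
qed

definition Fm :: "nat \<Rightarrow> nat \<Rightarrow> nat" where "Fm m s = s div m + s mod m"

definition Gp :: "nat \<Rightarrow> nat \<Rightarrow> int poly" where
  "Gp a y = (\<Sum>\<alpha><Suc y. \<Sum>\<beta><Suc (a * Suc y). monom 1 (Fm (Suc y) (\<alpha> + \<beta>)))"

definition Xp :: "nat \<Rightarrow> int poly" where "Xp k = monom 1 k"

lemma U_0: "U 0 = 0" by (simp add: U_def)

lemma U_add: "U (a + b) = U a + Xp a * U b"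
  by (induction b) (simp_all add: U_0 U_Suc Xp_def mult_monom algebra_simps)

lemma Xp_mult: "Xp i * Xp j = Xp (i + j)" by (simp add: Xp_def mult_monom)

lemma sum_Xp_U: "(\<Sum>i<k. Xp i) = U k" by (simp add: U_def Xp_def)

lemma Fm_shift: "0 < m \<Longrightarrow> Fm m (s + c * m) = c + Fm m s"
  by (simp add: Fm_def)

lemma inner1:
  assumes "\<alpha> < Suc y"
  shows "(\<Sum>\<beta><Suc (a * Suc y). Xp (Fm (Suc y) (\<alpha> + \<beta>)))
     = U a * (\<Sum>\<beta><Suc y. Xp (Fm (Suc y) (\<alpha> + \<beta>))) + Xp (a + \<alpha>)"
proof -
  let ?m = "Suc y"
  have "(\<Sum>\<beta><Suc (a * ?m). Xp (Fm ?m (\<alpha> + \<beta>))) = (\<Sum>\<beta><a * ?m. Xp (Fm ?m (\<alpha> + \<beta>))) + Xp (Fm ?m (\<alpha> + a * ?m))"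
    by simp
  also have "(\<Sum>\<beta><a * ?m. Xp (Fm ?m (\<alpha> + \<beta>))) = (\<Sum>c<a. \<Sum>d<?m. Xp (Fm ?m (\<alpha> + (c * ?m + d))))"
    by (rule sum_split_mult)
  also have "\<dots> = (\<Sum>c<a. \<Sum>d<?m. Xp c * Xp (Fm ?m (\<alpha> + d)))"
  proof (intro sum.cong refl)
    fix c d
    have "Fm ?m (\<alpha> + (c * ?m + d)) = c + Fm ?m (\<alpha> + d)"
      using Fm_shift[of ?m "\<alpha> + d" c] by (simp add: algebra_simps)
    then show "Xp (Fm ?m (\<alpha> + (c * ?m + d))) = Xp c * Xp (Fm ?m (\<alpha> + d))" by (simp add: Xp_mult)
  qed
  also have "\<dots> = U a * (\<Sum>\<beta><?m. Xp (Fm ?m (\<alpha> + \<beta>)))"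
    by (simp only: sum_Xp_U[symmetric] sum_product)
  also have "Fm ?m (\<alpha> + a * ?m) = a + \<alpha>" using Fm_shift[of ?m \<alpha> a] assms by (simp add: Fm_def)
  finally show ?thesis .
qed

lemma inner2:
  assumes "\<alpha> < Suc y"
  shows "(\<Sum>\<beta><Suc y. Xp (Fm (Suc y) (\<alpha> + \<beta>))) = Xp \<alpha> * U (Suc y - \<alpha>) + Xp 1 * U \<alpha>"
proof -
  let ?m = "Suc y"
  have m: "?m = (?m - \<alpha>) + \<alpha>" using assms by simp
  have "(\<Sum>\<beta><?m. Xp (Fm ?m (\<alpha> + \<beta>))) = (\<Sum>\<beta><(?m - \<alpha>) + \<alpha>. Xp (Fm ?m (\<alpha> + \<beta>)))"
    using m by simp
  also have "\<dots> = (\<Sum>\<beta><?m - \<alpha>. Xp (Fm ?m (\<alpha> + \<beta>))) + (\<Sum>j<\<alpha>. Xp (Fm ?m (\<alpha> + (?m - \<alpha> + j))))"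
    by (rule sum_add_range)
  also have "(\<Sum>\<beta><?m - \<alpha>. Xp (Fm ?m (\<alpha> + \<beta>))) = (\<Sum>\<beta><?m - \<alpha>. Xp \<alpha> * Xp \<beta>)"
    by (intro sum.cong refl) (simp add: Fm_def Xp_mult)
  also have "\<dots> = Xp \<alpha> * U (?m - \<alpha>)" by (simp only: sum_Xp_U[symmetric] sum_distrib_left)
  also have "(\<Sum>j<\<alpha>. Xp (Fm ?m (\<alpha> + (?m - \<alpha> + j)))) = (\<Sum>j<\<alpha>. Xp 1 * Xp j)"
  proof (intro sum.cong refl)
    fix j assume "j \<in> {..<\<alpha>}"
    then have j: "j < ?m" using assms by simp
    have "\<alpha> + (?m - \<alpha> + j) = j + 1 * ?m" using assms by simp
    then have "Fm ?m (\<alpha> + (?m - \<alpha> + j)) = Fm ?m (j + 1 * ?m)" by (simp only:)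
    also have "\<dots> = 1 + Fm ?m j" by (rule Fm_shift) simp
    also have "Fm ?m j = j" using j by (simp add: Fm_def)
    finally have "Fm ?m (\<alpha> + (?m - \<alpha> + j)) = 1 + j" .
    then show "Xp (Fm ?m (\<alpha> + (?m - \<alpha> + j))) = Xp 1 * Xp j" by (simp add: Xp_mult)
  qed
  also have "\<dots> = Xp 1 * U \<alpha>" by (simp only: sum_Xp_U[symmetric] sum_distrib_left)
  finally show ?thesis .
qed

lemma Dsum:
  "(\<Sum>\<alpha><Suc y. Xp \<alpha> * U (Suc y - \<alpha>) + Xp 1 * U \<alpha>) = 1 + (of_nat y + 2) * (Xp 1 * U y)"
proof (induction y)
  case 0 then show ?case by (simp add: U_def Xp_def)
next
  case (Suc y)
  have a: "Xp \<alpha> * U (Suc (Suc y) - \<alpha>) = Xp \<alpha> * U (Suc y - \<alpha>) + Xp (Suc y)" if "\<alpha> < Suc y" for \<alpha>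
  proof -
    have "Suc (Suc y) - \<alpha> = Suc (Suc y - \<alpha>)" using that by simp
    then have "Xp \<alpha> * U (Suc (Suc y) - \<alpha>) = Xp \<alpha> * (U (Suc y - \<alpha>) + Xp (Suc y - \<alpha>))"
      by (simp add: U_Suc Xp_def)
    also have "\<dots> = Xp \<alpha> * U (Suc y - \<alpha>) + Xp (Suc y)" using that by (simp add: algebra_simps Xp_mult)
    finally show ?thesis .
  qed
  have "(\<Sum>\<alpha><Suc (Suc y). Xp \<alpha> * U (Suc (Suc y) - \<alpha>) + Xp 1 * U \<alpha>)
     = (\<Sum>\<alpha><Suc y. Xp \<alpha> * U (Suc (Suc y) - \<alpha>) + Xp 1 * U \<alpha>) + (Xp (Suc y) * U 1 + Xp 1 * U (Suc y))"
    by simp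
  also have "(\<Sum>\<alpha><Suc y. Xp \<alpha> * U (Suc (Suc y) - \<alpha>) + Xp 1 * U \<alpha>)
     = (\<Sum>\<alpha><Suc y. (Xp \<alpha> * U (Suc y - \<alpha>) + Xp 1 * U \<alpha>) + Xp (Suc y))"
    by (intro sum.cong refl) (simp add: a)
  also have "\<dots> = (\<Sum>\<alpha><Suc y. Xp \<alpha> * U (Suc y - \<alpha>) + Xp 1 * U \<alpha>) + of_nat (Suc y) * Xp (Suc y)"
    by (simp only: sum.distrib sum_constant card_lessThan of_nat_def)
  also have "\<dots> = 1 + (of_nat y + 2) * (Xp 1 * U y) + of_nat (Suc y) * Xp (Suc y)" using Suc by simp
  finally have e: "(\<Sum>\<alpha><Suc (Suc y). Xp \<alpha> * U (Suc (Suc y) - \<alpha>) + Xp 1 * U \<alpha>)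
     = 1 + (of_nat y + 2) * (Xp 1 * U y) + of_nat (Suc y) * Xp (Suc y) + (Xp (Suc y) * U 1 + Xp 1 * U (Suc y))" .
  have U1: "U 1 = 1" by (simp add: U_def)
  have XU: "Xp 1 * U (Suc y) = Xp 1 * U y + Xp (Suc y)" by (simp add: U_Suc Xp_def mult_monom algebra_simps)
  show ?case unfolding e U1 XU
    by (simp add: algebra_simps)
qed

lemma Gp_eq: "Gp a y = U (a + Suc y) + (of_nat y + 2) * (Xp 1 * U y * U a)"
proof -
  have "Gp a y = (\<Sum>\<alpha><Suc y. \<Sum>\<beta><Suc (a * Suc y). Xp (Fm (Suc y) (\<alpha> + \<beta>)))"
    by (simp add: Gp_def Xp_def)
  also have "\<dots> = (\<Sum>\<alpha><Suc y. U a * (Xp \<alpha> * U (Suc y - \<alpha>) + Xp 1 * U \<alpha>) + Xp a * Xp \<alpha>)"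
  proof (intro sum.cong refl)
    fix \<alpha> assume "\<alpha> \<in> {..<Suc y}"
    then have h: "\<alpha> < Suc y" by simp
    show "(\<Sum>\<beta><Suc (a * Suc y). Xp (Fm (Suc y) (\<alpha> + \<beta>))) = U a * (Xp \<alpha> * U (Suc y - \<alpha>) + Xp 1 * U \<alpha>) + Xp a * Xp \<alpha>"
      by (simp only: inner1[OF h] inner2[OF h] Xp_mult)
  qed
  also have "\<dots> = U a * (\<Sum>\<alpha><Suc y. Xp \<alpha> * U (Suc y - \<alpha>) + Xp 1 * U \<alpha>) + Xp a * (\<Sum>\<alpha><Suc y. Xp \<alpha>)"
    by (simp only: sum.distrib[of "\<lambda>\<alpha>. U a * (Xp \<alpha> * U (Suc y - \<alpha>) + Xp 1 * U \<alpha>)" "\<lambda>\<alpha>. Xp a * Xp \<alpha>"] sum_distrib_left)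
  also have "\<dots> = U a * (\<Sum>\<alpha><Suc y. Xp \<alpha> * U (Suc y - \<alpha>) + Xp 1 * U \<alpha>) + Xp a * U (Suc y)"
    by (simp only: sum_Xp_U)
  also have "\<dots> = U a * (1 + (of_nat y + 2) * (Xp 1 * U y)) + Xp a * U (Suc y)" by (simp only: Dsum)
  also have "\<dots> = U (a + Suc y) + (of_nat y + 2) * (Xp 1 * U y * U a)"
    using U_add[of a "Suc y"] by (simp add: algebra_simps)
  finally show ?thesis .
qed



lemma coeff_UU: "coeff (U y * U a) i = int (min y (Suc i) - (Suc i - a))"
proof (induction y)
  case 0 then show ?case by (simp add: U_0)
next
  case (Suc y)
  have "coeff (U (Suc y) * U a) i = coeff (U y * U a) i + coeff (monom 1 y * U a) i"
    by (simp add: U_Suc algebra_simps)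
  also have "\<dots> = int (min y (Suc i) - (Suc i - a)) + (if i < y then 0 else if i - y < a then 1 else 0)"
    using Suc by (simp add: coeff_monom_mult coeff_U)
  also have "\<dots> = int (min (Suc y) (Suc i) - (Suc i - a))"
    by (auto simp: min_def)
  finally show ?case .
qed

lemma coeff_Gp: "coeff (Gp a y) j = (if j < a + Suc y then 1 else 0) + (int y + 2) * int (min y j - (j - a))"
proof -
  have c: "(of_nat y + 2 :: int poly) * p = smult (int y + 2) p" for p
    using of_nat_mult_conv_smult[of "y+2" p] by (simp add: add.commute)
  have "coeff (Xp 1 * U y * U a) j = (if j = 0 then 0 else int (min y j - (j - a)))"
    by (cases j) (simp_all add: Xp_def mult.assoc coeff_monom_mult coeff_UU)
  also have "\<dots> = int (min y j - (j - a))" by simp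
  finally show ?thesis by (simp add: Gp_eq c coeff_U)
qed

lemma Gp_nonneg: "0 \<le> coeff (Gp a y) j"
  by (simp add: coeff_Gp)

lemma Gp_peak: "peak (coeff (Gp a y)) ((a + y) div 2)"
  unfolding peak_def
proof (intro conjI allI impI)
  fix j assume j: "j < (a + y) div 2"
  have e: "min y j - (j - a) \<le> min y (Suc j) - (Suc j - a)" using j by (auto simp: min_def)
  have i: "(if j < a + Suc y then 1 else 0 :: int) \<le> (if Suc j < a + Suc y then 1 else 0)" using j by auto
  have "(int y + 2) * int (min y j - (j - a)) \<le> (int y + 2) * int (min y (Suc j) - (Suc j - a))"
    using e by (intro mult_left_mono) auto
  then show "coeff (Gp a y) j \<le> coeff (Gp a y) (Suc j)" unfolding coeff_Gp using i by linarith
next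
  fix j assume j: "(a + y) div 2 \<le> j"
  have e: "min y (Suc j) - (Suc j - a) \<le> min y j - (j - a)" using j by (auto simp: min_def)
  have i: "(if Suc j < a + Suc y then 1 else 0 :: int) \<le> (if j < a + Suc y then 1 else 0)" by auto
  have "(int y + 2) * int (min y (Suc j) - (Suc j - a)) \<le> (int y + 2) * int (min y j - (j - a))"
    using e by (intro mult_left_mono) auto
  then show "coeff (Gp a y) (Suc j) \<le> coeff (Gp a y) j" unfolding coeff_Gp using i by linarith
qed



lemma sum_q:
  fixes enum :: "nat \<Rightarrow> 'n::finite" and g :: "nat \<Rightarrow> nat"
  assumes bij: "bij_betw enum {..<x1 + x2 + x3} (UNIV :: 'n set)"
  shows "(\<Sum>i\<in>UNIV. g (qvec r1 r2 r3 x1 x2 x3 (inv_into {..<x1 + x2 + x3} enum i)))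
     = x1 * g r1 + x2 * g r2 + x3 * g r3"
proof -
  have b2: "bij_betw (inv_into {..<x1 + x2 + x3} enum) UNIV {..<x1 + x2 + x3}"
    using bij by (rule bij_betw_inv_into)
  have "(\<Sum>i\<in>UNIV. g (qvec r1 r2 r3 x1 x2 x3 (inv_into {..<x1 + x2 + x3} enum i)))
      = (\<Sum>j<x1 + x2 + x3. g (qvec r1 r2 r3 x1 x2 x3 j))"
    using sum.reindex_bij_betw[OF b2, of "\<lambda>j. g (qvec r1 r2 r3 x1 x2 x3 j)"] by simp
  also have "\<dots> = (\<Sum>j<x1. g (qvec r1 r2 r3 x1 x2 x3 j)) + (\<Sum>d<x2. g (qvec r1 r2 r3 x1 x2 x3 (x1 + d)))
       + (\<Sum>d<x3. g (qvec r1 r2 r3 x1 x2 x3 (x1 + x2 + d)))"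
    by (simp only: sum_add_range)
  also have "\<dots> = x1 * g r1 + x2 * g r2 + x3 * g r3"
    by (simp add: qvec_def)
  finally show ?thesis .
qed

lemma divh: "(v::nat) < K \<Longrightarrow> (u * K + v) div K = u"
  by simp

lemma wq_int: "int (wq q b) = int b - int (Dq q b)"
  using Dq_le[of q b] by (simp add: wq_def of_nat_diff)

lemma final_step:
  assumes "h_star P = U (Suc k) * G" "\<And>j. 0 \<le> coeff G j" "peak (coeff G) t"
  shows "unimodal (h_star P)"
proof -
  obtain t' where "peak (Wd k (coeff G)) t'" using Wd_peak[OF assms(2,3)] by blast
  then have "peak (coeff (U (Suc k) * G)) t'" by (simp add: coeff_U_mult[abs_def])
  then show ?thesis unfolding assms(1) by (rule peak_unimodal)
qed



lemma case4:
  fixes enum :: "nat \<Rightarrow> 'n::finite"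
  assumes bij: "bij_betw enum {..<x1 + x2 + x3} (UNIV :: 'n set)"
  defines "q \<equiv> (\<lambda>i. qvec 1 ((1 + x1) * (1 + x3)) ((1 + x1) * (1 + x2 * (1 + x3))) x1 x2 x3
                 (inv_into {..<x1 + x2 + x3} enum i))"
  shows "h_star (simplex1q q) = U (Suc x1) * Gp x2 x3"
proof -
  define m where "m = Suc x3"
  define M where "M = Suc (x2 * m)"
  define r2 where "r2 = (1 + x1) * (1 + x3)"
  define r3 where "r3 = (1 + x1) * (1 + x2 * (1 + x3))"
  have r2': "r2 = Suc x1 * m" by (simp add: r2_def m_def)
  have r3': "r3 = Suc x1 * M" by (simp add: r3_def M_def m_def)
  have qd: "q = (\<lambda>i. qvec 1 r2 r3 x1 x2 x3 (inv_into {..<x1 + x2 + x3} enum i))"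
    by (simp add: q_def r2_def r3_def)
  have Nq0: "Nq q = 1 + x1 * 1 + x2 * r2 + x3 * r3"
    unfolding Nq_def qd using sum_q[OF bij, of id] by simp
  have N: "Nq q = Suc x1 * (m * M)"
  proof -
    have "int (Nq q) = int (Suc x1 * (m * M))"
      unfolding Nq0 r2' r3' M_def m_def by (simp add: algebra_simps)
    then show ?thesis by (metis of_nat_eq_iff)
  qed
  have Dq0: "Dq q b = x1 * (1 * b div Nq q) + x2 * (r2 * b div Nq q) + x3 * (r3 * b div Nq q)" for b
  proof -
    have "Dq q b = (\<Sum>i\<in>UNIV. (\<lambda>v. v * b div Nq q) (qvec 1 r2 r3 x1 x2 x3 (inv_into {..<x1 + x2 + x3} enum i)))"
      unfolding Dq_def by (rule sum.cong) (simp_all add: qd)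
    also have "\<dots> = x1 * (1 * b div Nq q) + x2 * (r2 * b div Nq q) + x3 * (r3 * b div Nq q)"
      by (rule sum_q[OF bij])
    finally show ?thesis .
  qed
  have mpos: "m > 0" by (simp add: m_def)
  have w: "wq q (c * (m * M) + (\<alpha> * M + \<beta>)) = c + Fm m (\<alpha> + \<beta>)"
    if c: "c < Suc x1" and a: "\<alpha> < m" and be: "\<beta> < M" for c \<alpha> \<beta>
  proof -
    define b where "b = c * (m * M) + (\<alpha> * M + \<beta>)"
    have d: "\<alpha> * M + \<beta> < m * M"
    proof -
      have "\<alpha> * M + \<beta> < \<alpha> * M + M" using be by simp
      also have "\<dots> = Suc \<alpha> * M" by simp
      also have "\<dots> \<le> m * M" using a by (intro mult_right_mono) auto
      finally show ?thesis .
    qed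
    have bN: "b < Nq q"
    proof -
      have "b < c * (m * M) + m * M" using d by (simp add: b_def)
      also have "\<dots> = Suc c * (m * M)" by simp
      also have "\<dots> \<le> Suc x1 * (m * M)" using c by (intro mult_right_mono) auto
      finally show ?thesis using N by simp
    qed
    have d1: "1 * b div Nq q = 0" using bN by simp
    have d2: "r2 * b div Nq q = c * m + \<alpha>"
    proof -
      have "r2 * b div Nq q = (Suc x1 * m) * b div ((Suc x1 * m) * M)" unfolding r2' N by (simp only: mult.assoc)
      also have "\<dots> = b div M" by (rule div_mult_mult1) (simp add: m_def)
      also have "\<dots> = c * m + \<alpha>"
      proof -
        have "b = (c * m + \<alpha>) * M + \<beta>" by (simp add: b_def algebra_simps)
        then show ?thesis using divh[OF be, of "c * m + \<alpha>"] by simp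
      qed
      finally show ?thesis .
    qed
    have d3: "r3 * b div Nq q = c * M + \<alpha> * x2 + (\<alpha> + \<beta>) div m"
    proof -
      have "r3 * b div Nq q = (Suc x1 * M) * b div ((Suc x1 * M) * m)" by (simp add: r3' N algebra_simps)
      also have "\<dots> = b div m" by (rule div_mult_mult1) (simp add: M_def)
      also have "\<dots> = c * M + \<alpha> * x2 + (\<alpha> + \<beta>) div m"
      proof -
        have "b = (\<alpha> + \<beta>) + (c * M + \<alpha> * x2) * m" by (simp add: b_def M_def algebra_simps)
        then show ?thesis using mpos by simp
      qed
      finally show ?thesis .
    qed
    define D where "D = (\<alpha> + \<beta>) div m"
    define Rm where "Rm = (\<alpha> + \<beta>) mod m"
    have s: "int \<alpha> + int \<beta> = int m * int D + int Rm"
    proof -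
      have "\<alpha> + \<beta> = m * D + Rm" unfolding D_def Rm_def by (rule mult_div_mod_eq[symmetric])
      then have "int (\<alpha> + \<beta>) = int (m * D + Rm)" by (rule arg_cong)
      then show ?thesis by simp
    qed
    have "int (wq q b) = int b - int (Dq q b)" by (rule wq_int)
    also have "\<dots> = int c + int D + int Rm"
    proof -
      have "Dq q b = x2 * (c * m + \<alpha>) + x3 * (c * M + \<alpha> * x2 + D)"
        unfolding Dq0 d1 d2 d3 D_def by simp
      then have e: "int (Dq q b) = int x2 * (int c * int m + int \<alpha>) + int x3 * (int c * int M + int \<alpha> * int x2 + int D)"
        by simp
      have mm: "int m = 1 + int x3" by (simp add: m_def)
      have MM: "int M = 1 + int x2 * int m" by (simp add: M_def)
      have bb: "int b = int c * (int m * int M) + (int \<alpha> * int M + int \<beta>)" by (simp add: b_def)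
      show ?thesis unfolding e bb using s mm MM by algebra
    qed
    finally have "int (wq q b) = int (c + Fm m (\<alpha> + \<beta>))" by (simp add: Fm_def D_def Rm_def)
    then show ?thesis unfolding b_def by simp
  qed
  have "h_star (simplex1q q) = (\<Sum>b<Suc x1 * (m * M). monom 1 (wq q b))"
    by (simp add: hstar_eq Hpoly_def N)
  also have "\<dots> = (\<Sum>c<Suc x1. \<Sum>\<alpha><m. \<Sum>\<beta><M. monom 1 (wq q (c * (m * M) + (\<alpha> * M + \<beta>))))"
    by (simp only: sum_split_mult)
  also have "\<dots> = (\<Sum>c<Suc x1. \<Sum>\<alpha><m. \<Sum>\<beta><M. Xp c * Xp (Fm m (\<alpha> + \<beta>)))"
    by (intro sum.cong refl) (simp add: w Xp_def mult_monom)
  also have "\<dots> = U (Suc x1) * Gp x2 x3"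
    unfolding Gp_def sum_Xp_U[symmetric] sum_distrib_right m_def M_def by (simp only: sum_distrib_left Xp_def)
  finally show ?thesis .
qed



lemma case2:
  fixes enum :: "nat \<Rightarrow> 'n::finite"
  assumes bij: "bij_betw enum {..<x1 + x2 + x3} (UNIV :: 'n set)"
  defines "q \<equiv> (\<lambda>i. qvec (1 + x2) (1 + x1 * (1 + x2)) ((1 + x1 * (1 + x2)) * (1 + x2)) x1 x2 x3
                 (inv_into {..<x1 + x2 + x3} enum i))"
  shows "h_star (simplex1q q) = U (Suc x3) * Gp x1 x2"
proof -
  define m where "m = Suc x2"
  define P where "P = Suc (x1 * m)"
  define p3 where "p3 = Suc x3"
  define r1 where "r1 = 1 + x2"
  define r2 where "r2 = 1 + x1 * (1 + x2)"
  define r3 where "r3 = (1 + x1 * (1 + x2)) * (1 + x2)"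
  have r1': "r1 = m" by (simp add: r1_def m_def)
  have r2': "r2 = P" by (simp add: r2_def P_def m_def)
  have r3': "r3 = P * m" by (simp add: r3_def P_def m_def)
  have qd: "q = (\<lambda>i. qvec r1 r2 r3 x1 x2 x3 (inv_into {..<x1 + x2 + x3} enum i))"
    by (simp add: q_def r1_def r2_def r3_def)
  have Nq0: "Nq q = 1 + x1 * r1 + x2 * r2 + x3 * r3"
    unfolding Nq_def qd using sum_q[OF bij, of id] by simp
  have N: "Nq q = (m * P) * p3"
  proof -
    have "int (Nq q) = int ((m * P) * p3)"
      unfolding Nq0 r1' r2' r3' P_def m_def p3_def by (simp add: algebra_simps)
    then show ?thesis by (metis of_nat_eq_iff)
  qed
  have Dq0: "Dq q b = x1 * (r1 * b div Nq q) + x2 * (r2 * b div Nq q) + x3 * (r3 * b div Nq q)" for b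
  proof -
    have "Dq q b = (\<Sum>i\<in>UNIV. (\<lambda>v. v * b div Nq q) (qvec r1 r2 r3 x1 x2 x3 (inv_into {..<x1 + x2 + x3} enum i)))"
      unfolding Dq_def by (rule sum.cong) (simp_all add: qd)
    also have "\<dots> = x1 * (r1 * b div Nq q) + x2 * (r2 * b div Nq q) + x3 * (r3 * b div Nq q)"
      by (rule sum_q[OF bij])
    finally show ?thesis .
  qed
  have mpos: "m > 0" by (simp add: m_def)
  have Ppos: "P > 0" by (simp add: P_def)
  have p3pos: "p3 > 0" by (simp add: p3_def)
  have w: "wq q ((\<alpha> * P + \<beta>) * p3 + d) = Fm m (\<alpha> + \<beta>) + d"
    if a: "\<alpha> < m" and be: "\<beta> < P" and dd: "d < p3" for \<alpha> \<beta> d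
  proof -
    define c where "c = \<alpha> * P + \<beta>"
    define b where "b = c * p3 + d"
    have bp3: "b div p3 = c" using divh[OF dd, of c] by (simp add: b_def)
    have d1: "r1 * b div Nq q = \<alpha>"
    proof -
      have "r1 * b div Nq q = m * b div (m * (P * p3))" by (simp only: r1' N mult.assoc)
      also have "\<dots> = b div (P * p3)" by (rule div_mult_mult1) (simp add: m_def)
      also have "\<dots> = \<alpha>"
      proof -
        have lt: "\<beta> * p3 + d < P * p3"
        proof -
          have "\<beta> * p3 + d < \<beta> * p3 + p3" using dd by simp
          also have "\<dots> = Suc \<beta> * p3" by simp
          also have "\<dots> \<le> P * p3" using be by (intro mult_right_mono) auto
          finally show ?thesis .
        qed
        have "b = \<alpha> * (P * p3) + (\<beta> * p3 + d)" by (simp add: b_def c_def algebra_simps)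
        then show ?thesis using divh[OF lt, of \<alpha>] by simp
      qed
      finally show ?thesis .
    qed
    have d2: "r2 * b div Nq q = \<alpha> * x1 + (\<alpha> + \<beta>) div m"
    proof -
      have "r2 * b div Nq q = P * b div (P * (p3 * m))" proof -
        have "Nq q = P * (p3 * m)" using N by (simp add: ac_simps)
        then show ?thesis by (simp only: r2')
      qed
      also have "\<dots> = b div (p3 * m)" by (rule div_mult_mult1) (simp add: P_def)
      also have "\<dots> = c div m" by (simp add: div_mult2_eq bp3)
      also have "\<dots> = \<alpha> * x1 + (\<alpha> + \<beta>) div m"
      proof -
        have "c = (\<alpha> + \<beta>) + (\<alpha> * x1) * m" by (simp add: c_def P_def algebra_simps)
        then show ?thesis using mpos by simp
      qed
      finally show ?thesis .
    qed
    have d3: "r3 * b div Nq q = c"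
    proof -
      have "r3 * b div Nq q = (m * P) * b div ((m * P) * p3)" by (simp only: r3' N mult.commute[of P m])
      also have "\<dots> = b div p3" by (rule div_mult_mult1) (simp add: P_def m_def)
      finally show ?thesis using bp3 by simp
    qed
    define D where "D = (\<alpha> + \<beta>) div m"
    define Rm where "Rm = (\<alpha> + \<beta>) mod m"
    have s: "int \<alpha> + int \<beta> = int m * int D + int Rm"
    proof -
      have "\<alpha> + \<beta> = m * D + Rm" unfolding D_def Rm_def by (rule mult_div_mod_eq[symmetric])
      then have "int (\<alpha> + \<beta>) = int (m * D + Rm)" by (rule arg_cong)
      then show ?thesis by simp
    qed
    have "int (wq q b) = int b - int (Dq q b)" by (rule wq_int)
    also have "\<dots> = int D + int Rm + int d"
    proof -
      have "Dq q b = x1 * \<alpha> + x2 * (\<alpha> * x1 + D) + x3 * c"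
        unfolding Dq0 d1 d2 d3 D_def by simp
      then have e: "int (Dq q b) = int x1 * int \<alpha> + int x2 * (int \<alpha> * int x1 + int D) + int x3 * int c"
        by simp
      have mm: "int m = 1 + int x2" by (simp add: m_def)
      have PP: "int P = 1 + int x1 * int m" by (simp add: P_def)
      have pp: "int p3 = 1 + int x3" by (simp add: p3_def)
      have cc: "int c = int \<alpha> * int P + int \<beta>" by (simp add: c_def)
      have bb: "int b = int c * int p3 + int d" by (simp add: b_def)
      show ?thesis unfolding e bb using s mm PP pp cc by algebra
    qed
    finally have "int (wq q b) = int (Fm m (\<alpha> + \<beta>) + d)" by (simp add: Fm_def D_def Rm_def)
    then show ?thesis unfolding b_def c_def by simp
  qed
  have "h_star (simplex1q q) = (\<Sum>b<(m * P) * p3. monom 1 (wq q b))"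
    by (simp add: hstar_eq Hpoly_def N)
  also have "\<dots> = (\<Sum>\<alpha><m. \<Sum>\<beta><P. \<Sum>d<p3. monom 1 (wq q ((\<alpha> * P + \<beta>) * p3 + d)))"
    by (simp only: sum_split_mult)
  also have "\<dots> = (\<Sum>\<alpha><m. \<Sum>\<beta><P. \<Sum>d<p3. monom 1 (Fm m (\<alpha> + \<beta>)) * Xp d)"
    by (intro sum.cong refl) (simp add: w Xp_def mult_monom)
  also have "\<dots> = Gp x1 x2 * U (Suc x3)"
    unfolding Gp_def sum_Xp_U[symmetric] sum_distrib_right m_def P_def p3_def by (simp only: sum_distrib_left)
  finally show ?thesis by (simp add: mult.commute)
qed

lemma case1:
  fixes enum :: "nat \<Rightarrow> 'n::finite"
  assumes bij: "bij_betw enum {..<x1 + x2 + x3} (UNIV :: 'n set)"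
  defines "q \<equiv> (\<lambda>i. qvec 1 (1 + x1) ((1 + x1) * (1 + x2)) x1 x2 x3
                 (inv_into {..<x1 + x2 + x3} enum i))"
  shows "h_star (simplex1q q) = U (Suc x1) * (U (Suc x2) * U (Suc x3))"
proof -
  define p1 where "p1 = Suc x1"
  define p2 where "p2 = Suc x2"
  define p3 where "p3 = Suc x3"
  define r2 where "r2 = 1 + x1"
  define r3 where "r3 = (1 + x1) * (1 + x2)"
  have r2': "r2 = p1" by (simp add: r2_def p1_def)
  have r3': "r3 = p1 * p2" by (simp add: r3_def p1_def p2_def)
  have qd: "q = (\<lambda>i. qvec 1 r2 r3 x1 x2 x3 (inv_into {..<x1 + x2 + x3} enum i))"
    by (simp add: q_def r2_def r3_def)
  have Nq0: "Nq q = 1 + x1 * 1 + x2 * r2 + x3 * r3"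
    unfolding Nq_def qd using sum_q[OF bij, of id] by simp
  have N: "Nq q = p1 * (p2 * p3)"
  proof -
    have "int (Nq q) = int (p1 * (p2 * p3))"
      unfolding Nq0 r2' r3' p1_def p2_def p3_def by (simp add: algebra_simps)
    then show ?thesis by (metis of_nat_eq_iff)
  qed
  have Dq0: "Dq q b = x1 * (1 * b div Nq q) + x2 * (r2 * b div Nq q) + x3 * (r3 * b div Nq q)" for b
  proof -
    have "Dq q b = (\<Sum>i\<in>UNIV. (\<lambda>v. v * b div Nq q) (qvec 1 r2 r3 x1 x2 x3 (inv_into {..<x1 + x2 + x3} enum i)))"
      unfolding Dq_def by (rule sum.cong) (simp_all add: qd)
    also have "\<dots> = x1 * (1 * b div Nq q) + x2 * (r2 * b div Nq q) + x3 * (r3 * b div Nq q)"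
      by (rule sum_q[OF bij])
    finally show ?thesis .
  qed
  have w: "wq q (c * (p2 * p3) + (e * p3 + f)) = c + (e + f)"
    if c: "c < p1" and ee: "e < p2" and ff: "f < p3" for c e f
  proof -
    define b where "b = c * (p2 * p3) + (e * p3 + f)"
    have lt: "e * p3 + f < p2 * p3"
    proof -
      have "e * p3 + f < e * p3 + p3" using ff by simp
      also have "\<dots> = Suc e * p3" by simp
      also have "\<dots> \<le> p2 * p3" using ee by (intro mult_right_mono) auto
      finally show ?thesis .
    qed
    have bN: "b < Nq q"
    proof -
      have "b < c * (p2 * p3) + p2 * p3" using lt by (simp add: b_def)
      also have "\<dots> = Suc c * (p2 * p3)" by simp
      also have "\<dots> \<le> p1 * (p2 * p3)" using c by (intro mult_right_mono) auto
      finally show ?thesis using N by simp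
    qed
    have d1: "1 * b div Nq q = 0" using bN by simp
    have d2: "r2 * b div Nq q = c"
    proof -
      have "r2 * b div Nq q = p1 * b div (p1 * (p2 * p3))" by (simp only: r2' N)
      also have "\<dots> = b div (p2 * p3)" by (rule div_mult_mult1) (simp add: p1_def)
      also have "\<dots> = c" using divh[OF lt, of c] by (simp add: b_def)
      finally show ?thesis .
    qed
    have d3: "r3 * b div Nq q = c * p2 + e"
    proof -
      have "r3 * b div Nq q = (p1 * p2) * b div ((p1 * p2) * p3)" by (simp only: r3' N mult.assoc)
      also have "\<dots> = b div p3" by (rule div_mult_mult1) (simp add: p1_def p2_def)
      also have "\<dots> = c * p2 + e"
      proof -
        have "b = (c * p2 + e) * p3 + f" by (simp add: b_def algebra_simps)
        then show ?thesis using divh[OF ff, of "c * p2 + e"] by simp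
      qed
      finally show ?thesis .
    qed
    have "int (wq q b) = int b - int (Dq q b)" by (rule wq_int)
    also have "\<dots> = int c + int e + int f"
    proof -
      have "Dq q b = x2 * c + x3 * (c * p2 + e)"
        unfolding Dq0 d1 d2 d3 by simp
      then have e: "int (Dq q b) = int x2 * int c + int x3 * (int c * int p2 + int e)"
        by simp
      have pp2: "int p2 = 1 + int x2" by (simp add: p2_def)
      have pp3: "int p3 = 1 + int x3" by (simp add: p3_def)
      have bb: "int b = int c * (int p2 * int p3) + (int e * int p3 + int f)" by (simp add: b_def)
      show ?thesis unfolding e bb using pp2 pp3 by algebra
    qed
    finally have "int (wq q b) = int (c + (e + f))" by simp
    then show ?thesis unfolding b_def by simp
  qed
  have "h_star (simplex1q q) = (\<Sum>b<p1 * (p2 * p3). monom 1 (wq q b))"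
    by (simp add: hstar_eq Hpoly_def N)
  also have "\<dots> = (\<Sum>c<p1. \<Sum>e<p2. \<Sum>f<p3. monom 1 (wq q (c * (p2 * p3) + (e * p3 + f))))"
    by (simp only: sum_split_mult)
  also have "\<dots> = (\<Sum>c<p1. \<Sum>e<p2. \<Sum>f<p3. Xp c * (Xp e * Xp f))"
    by (intro sum.cong refl) (simp add: w Xp_def mult_monom)
  also have "\<dots> = U (Suc x1) * (U (Suc x2) * U (Suc x3))"
    unfolding sum_Xp_U[symmetric] sum_distrib_right p1_def p2_def p3_def by (simp only: sum_distrib_left)
  finally show ?thesis .
qed


theorem theorem4p6:
  fixes x1 x2 x3 r1 r2 r3 :: nat and enum :: "nat \<Rightarrow> 'n::finite"
  assumes "x1 \<ge> 1" "x2 \<ge> 1" "x3 \<ge> 1"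
    and "bij_betw enum {..<x1 + x2 + x3} (UNIV :: 'n set)"
    and "(r1, r2, r3) = (1, 1 + x1, (1 + x1) * (1 + x2))
       \<or> (r1, r2, r3) = (1 + x2, 1 + x1 * (1 + x2), (1 + x1 * (1 + x2)) * (1 + x2))
       \<or> (r1, r2, r3) = (1, (1 + x1) * (1 + x3), (1 + x1) * (1 + x2 * (1 + x3)))"
  shows "unimodal (h_star (simplex1q
           (\<lambda>i. qvec r1 r2 r3 x1 x2 x3 (inv_into {..<x1 + x2 + x3} enum i))))"
proof -
  have bij: "bij_betw enum {..<x1 + x2 + x3} (UNIV :: 'n set)" by fact
  from assms(5) consider
      (i) "r1 = 1" "r2 = 1 + x1" "r3 = (1 + x1) * (1 + x2)"
    | (ii) "r1 = 1 + x2" "r2 = 1 + x1 * (1 + x2)" "r3 = (1 + x1 * (1 + x2)) * (1 + x2)"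
    | (iv) "r1 = 1" "r2 = (1 + x1) * (1 + x3)" "r3 = (1 + x1) * (1 + x2 * (1 + x3))"
    by auto
  then show ?thesis
  proof cases
    case i
    have h: "h_star (simplex1q (\<lambda>i. qvec r1 r2 r3 x1 x2 x3 (inv_into {..<x1 + x2 + x3} enum i)))
        = U (Suc x1) * (U (Suc x2) * U (Suc x3))"
      unfolding i by (rule case1[OF bij])
    obtain t where t: "peak (Wd x2 (coeff (U (Suc x3)))) t"
      using Wd_peak[OF coeff_U_nonneg peak_U] by blast
    show ?thesis
    proof (rule final_step[OF h])
      show "\<And>j. 0 \<le> coeff (U (Suc x2) * U (Suc x3)) j"
        by (simp add: coeff_U_mult Wd_nonneg coeff_U_nonneg)
      show "peak (coeff (U (Suc x2) * U (Suc x3))) t"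
        using t by (simp add: coeff_U_mult[abs_def])
    qed
  next
    case ii
    have h: "h_star (simplex1q (\<lambda>i. qvec r1 r2 r3 x1 x2 x3 (inv_into {..<x1 + x2 + x3} enum i)))
        = U (Suc x3) * Gp x1 x2"
      unfolding ii by (rule case2[OF bij])
    show ?thesis by (rule final_step[OF h Gp_nonneg Gp_peak])
  next
    case iv
    have h: "h_star (simplex1q (\<lambda>i. qvec r1 r2 r3 x1 x2 x3 (inv_into {..<x1 + x2 + x3} enum i)))
        = U (Suc x1) * Gp x2 x3"
      unfolding iv by (rule case4[OF bij])
    show ?thesis by (rule final_step[OF h Gp_nonneg Gp_peak])
  qed
qed

end
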